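(* Let $r>c>\nu$ and $0<t<r-\nu$, set $R=(r-c)/(r-\nu)$, $\gamma=t/(r-\nu)$, fix $\rho\in[0,1)$, and for each integer $n\ge1$ let $L_n=\sqrt{n/(1+(n-1)\rho)}$ and let $Y_n$ be the unique real solution of $$R=\gamma\,\Phi(Y_n)+(1-\gamma)\,\Phi(L_nY_n),$$ with $\Phi$ the standard normal cdf. If $R>1/2$ (over-mean problem), then $Y_1>Y_2>\dots>Y_n>\dots>0$. If $R<1/2$ (under-mean problem), then $Y_1<Y_2<\dots<Y_n<\dots<0$.
   Context: $Y_n$ is the standardized optimal common order quantity $(X_n-\mu)/\sigma$ of a transshipment coalition of $n$ identical newsvendors (selling price $r$, cost $c$, salvage value $\nu$, unit transportation cost $t$) facing jointly normal demands with mean $\mu$, standard deviation $\sigma$ and common pairwise correlation $\rho$. The right-hand side of the defining equation is strictly increasing in $Y_n$ from $0$ to $1$, so $Y_n$ is well defined. *)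

theory Defs
  imports "HOL-Probability.Probability"
begin

definition Phi :: "real \<Rightarrow> real" where
  "Phi x = measure (density lborel std_normal_density) {..x}"

end

theory Submission imports Defs begin

abbreviation "NN \<equiv> density lborel (\<lambda>x. ennreal (std_normal_density x))"

lemma NN_prob: "prob_space NN"
  using prob_space_normal_density by simp

lemma NN_emeasure: "emeasure NN A = (\<integral>\<^sup>+ x. ennreal (std_normal_density x) * indicator A x \<partial>lborel)"
  if "A \<in> sets borel" using that by (subst emeasure_density) auto

lemma NN_pos: assumes "x < y" shows "0 < measure NN {x<..y}"
proof -
  define c where "c = std_normal_density (\<bar>x\<bar> + \<bar>y\<bar>)"
  have c: "c > 0" unfolding c_def by (simp add: normal_density_pos)
  have le: "ennreal c * indicator {x<..y} z \<le> ennreal (std_normal_density z) * indicator {x<..y} z" for z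
  proof (cases "z \<in> {x<..y}")
    case True
    then have "\<bar>z\<bar> \<le> \<bar>x\<bar> + \<bar>y\<bar>" by auto
    then have "z^2 \<le> (\<bar>x\<bar> + \<bar>y\<bar>)^2"
      by (metis abs_ge_zero abs_le_square_iff abs_of_nonneg add_nonneg_nonneg)
    then have "c \<le> std_normal_density z" unfolding c_def std_normal_density_def
      by (intro mult_left_mono) auto
    then show ?thesis using True by (simp add: ennreal_leI)
  qed auto
  have "ennreal c * ennreal (y - x) = (\<integral>\<^sup>+ z. ennreal c * indicator {x<..y} z \<partial>lborel)"
    using assms by (simp add: nn_integral_cmult_indicator)
  also have "\<dots> \<le> emeasure NN {x<..y}"
    by (subst NN_emeasure) (auto intro!: nn_integral_mono le)
  finally have "0 < emeasure NN {x<..y}"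
    using c assms by (metis ennreal_mult_eq_top_iff ennreal_zero_less_mult_iff ennreal_less_zero_iff diff_gt_0_iff_gt order_less_le_trans)
  then show ?thesis
    using finite_measure.emeasure_eq_measure[OF prob_space.finite_measure[OF NN_prob]] by (simp add: ennreal_less_zero_iff)
qed

lemma Phi_strict: assumes "x < y" shows "Phi x < Phi y"
proof -
  interpret prob_space NN by (rule NN_prob)
  have "{..y} = {..x} \<union> {x<..y}" using assms by auto
  moreover have "measure NN ({..x} \<union> {x<..y}) = measure NN {..x} + measure NN {x<..y}"
    by (rule finite_measure_Union) auto
  ultimately have "measure NN {..y} = measure NN {..x} + measure NN {x<..y}" by simp
  then show ?thesis unfolding Phi_def using NN_pos[OF assms] by simp
qed

lemma Phi_mono: "x \<le> y \<Longrightarrow> Phi x \<le> Phi y"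
  using Phi_strict by (cases "x = y") (auto intro: less_imp_le)

lemma NN_sing: "emeasure NN {0} = 0"
proof -
  have "emeasure NN {0} = (\<integral>\<^sup>+ x. ennreal (std_normal_density 0) * indicator {0} (x::real) \<partial>lborel)"
    by (subst NN_emeasure) (auto intro!: nn_integral_cong split: split_indicator)
  also have "\<dots> = ennreal (std_normal_density 0) * emeasure lborel {0::real}"
    by (rule nn_integral_cmult_indicator) auto
  also have "\<dots> = 0" by simp
  finally show ?thesis .
qed

lemma Phi0: "Phi 0 = 1/2"
proof -
  interpret prob_space NN by (rule NN_prob)
  have sing: "emeasure NN {0} = 0" by (rule NN_sing)
  have sym: "emeasure NN {..0} = emeasure NN {0..}"
  proof -
    have "emeasure NN {..0} = (\<integral>\<^sup>+ x. ennreal (std_normal_density x) * indicator {..0} x \<partial>lborel)"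
      by (rule NN_emeasure) auto
    also have "\<dots> = ennreal \<bar>-1\<bar> * (\<integral>\<^sup>+ x. ennreal (std_normal_density (0 + -1 * x)) * indicator {..0} (0 + -1*x) \<partial>lborel)"
      by (rule nn_integral_real_affine) auto
    also have "\<dots> = (\<integral>\<^sup>+ x. ennreal (std_normal_density x) * indicator {0..} x \<partial>lborel)"
      by (auto intro!: nn_integral_cong simp: std_normal_density_def split: split_indicator)
    also have "\<dots> = emeasure NN {0..}" by (rule NN_emeasure[symmetric]) auto
    finally show ?thesis .
  qed
  then have a: "measure NN {..0} = measure NN {0..}" by (simp add: measure_def)
  have "measure NN {0} = 0" using sing by (simp add: measure_def)
  moreover have "{0::real..} = {0} \<union> {0<..}" by auto
  moreover have "measure NN ({0::real} \<union> {0<..}) = measure NN {0} + measure NN {0<..}"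
    by (rule finite_measure_Union) auto
  ultimately have b: "measure NN {0..} = measure NN {0<..}"
    by simp
  have "UNIV = {..0::real} \<union> {0<..}" by auto
  then have "(1::real) = measure NN {..0} + measure NN {0<..}"
    using prob_space finite_measure_Union[of "{..0}" "{0<..}"] by (auto simp: ivl_disj_int(1) disjoint_iff)
  then show ?thesis unfolding Phi_def using a b by simp
qed

lemma L_mono:
  fixes \<rho> :: real and n :: nat
  assumes "0 \<le> \<rho>" "\<rho> < 1" "n \<ge> 1"
  shows "0 < sqrt (real n / (1 + (real n - 1) * \<rho>))"
    and "sqrt (real n / (1 + (real n - 1) * \<rho>)) < sqrt (real (Suc n) / (1 + (real (Suc n) - 1) * \<rho>))"
proof -
  have d1: "1 + (real n - 1) * \<rho> > 0" using assms by (simp add: add_pos_nonneg)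
  have d2: "1 + real n * \<rho> > 0" using assms by (simp add: add_pos_nonneg)
  show "0 < sqrt (real n / (1 + (real n - 1) * \<rho>))" using d1 assms by simp
  have "real n * (1 + real n * \<rho>) < (real n + 1) * (1 + (real n - 1) * \<rho>)"
    using assms by (simp add: algebra_simps)
  then have "real n / (1 + (real n - 1) * \<rho>) < (real n + 1) / (1 + real n * \<rho>)"
    using d1 d2 by (simp add: divide_simps)
  then show "sqrt (real n / (1 + (real n - 1) * \<rho>)) < sqrt (real (Suc n) / (1 + (real (Suc n) - 1) * \<rho>))"
    by (simp add: add.commute)
qed

theorem theorem3:
  fixes r c \<nu> t \<rho> :: real and Y :: "nat \<Rightarrow> real"
  assumes "r > c" and "c > \<nu>" and "0 < t" and "t < r - \<nu>"
    and "0 \<le> \<rho>" and "\<rho> < 1"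
    and Y_eq: "\<forall>n\<ge>1. (r - c) / (r - \<nu>) =
        (t / (r - \<nu>)) * Phi (Y n)
        + (1 - t / (r - \<nu>)) * Phi (sqrt (real n / (1 + (real n - 1) * \<rho>)) * Y n)"
  shows "((r - c) / (r - \<nu>) > 1/2 \<longrightarrow> (\<forall>n\<ge>1. Y (Suc n) < Y n \<and> 0 < Y n))
       \<and> ((r - c) / (r - \<nu>) < 1/2 \<longrightarrow> (\<forall>n\<ge>1. Y n < Y (Suc n) \<and> Y n < 0))"
proof -
  define R where "R = (r - c) / (r - \<nu>)"
  define g where "g = t / (r - \<nu>)"
  define L where "L = (\<lambda>n::nat. sqrt (real n / (1 + (real n - 1) * \<rho>)))"
  have g0: "0 < g" and g1: "g < 1" using assms unfolding g_def by (auto simp: divide_simps)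
  have E: "R = g * Phi (Y n) + (1 - g) * Phi (L n * Y n)" if "n \<ge> 1" for n
    using Y_eq that unfolding R_def g_def L_def by auto
  have L0: "0 < L n" and L1: "L n < L (Suc n)" if "n \<ge> 1" for n
    using L_mono[OF assms(5,6) that] unfolding L_def by auto
  have P1: "Phi y \<le> 1/2" if "y \<le> 0" for y using Phi_mono[OF that] Phi0 by simp
  have P2: "Phi y \<ge> 1/2" if "y \<ge> 0" for y using Phi_mono[OF that] Phi0 by simp
  have over: "Y (Suc n) < Y n \<and> 0 < Y n" if "R > 1/2" "n \<ge> 1" for n
  proof -
    have pos: "0 < Y m" if "m \<ge> 1" for m
    proof (rule ccontr)
      assume "\<not> 0 < Y m"
      then have "Y m \<le> 0" by simp
      moreover have "L m * Y m \<le> 0" using L0[OF that] \<open>Y m \<le> 0\<close> by (simp add: mult_nonneg_nonpos)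
      ultimately have "Phi (Y m) \<le> 1/2" "Phi (L m * Y m) \<le> 1/2" using P1 by auto
      then have "g * Phi (Y m) + (1 - g) * Phi (L m * Y m) \<le> g * (1/2) + (1 - g) * (1/2)"
        using g0 g1 by (intro add_mono mult_left_mono) auto
      then show False using E[OF that] \<open>R > 1/2\<close> by (simp add: field_simps)
    qed
    have "Y (Suc n) < Y n"
    proof (rule ccontr)
      assume "\<not> Y (Suc n) < Y n"
      then have le: "Y n \<le> Y (Suc n)" by simp
      have yn: "0 < Y n" using pos[OF \<open>n \<ge> 1\<close>] .
      have "L n * Y n < L (Suc n) * Y n" using L1[OF \<open>n \<ge> 1\<close>] yn by simp
      also have "\<dots> \<le> L (Suc n) * Y (Suc n)" using le L0[of "Suc n"] by simp
      finally have "Phi (L n * Y n) < Phi (L (Suc n) * Y (Suc n))" by (rule Phi_strict)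
      moreover have "Phi (Y n) \<le> Phi (Y (Suc n))" using Phi_mono[OF le] .
      ultimately have "g * Phi (Y n) + (1 - g) * Phi (L n * Y n) < g * Phi (Y (Suc n)) + (1 - g) * Phi (L (Suc n) * Y (Suc n))"
        using g0 g1 by (intro add_le_less_mono mult_left_mono mult_strict_left_mono) auto
      then show False using E[OF \<open>n \<ge> 1\<close>] E[of "Suc n"] \<open>n \<ge> 1\<close> by simp
    qed
    then show ?thesis using pos[OF \<open>n \<ge> 1\<close>] by simp
  qed
  have under: "Y n < Y (Suc n) \<and> Y n < 0" if "R < 1/2" "n \<ge> 1" for n
  proof -
    have neg: "Y m < 0" if "m \<ge> 1" for m
    proof (rule ccontr)
      assume "\<not> Y m < 0"
      then have "Y m \<ge> 0" by simp
      moreover have "L m * Y m \<ge> 0" using L0[OF that] \<open>Y m \<ge> 0\<close> by simp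
      ultimately have "Phi (Y m) \<ge> 1/2" "Phi (L m * Y m) \<ge> 1/2" using P2 by auto
      then have "g * Phi (Y m) + (1 - g) * Phi (L m * Y m) \<ge> g * (1/2) + (1 - g) * (1/2)"
        using g0 g1 by (intro add_mono mult_left_mono) auto
      then show False using E[OF that] \<open>R < 1/2\<close> by (simp add: field_simps)
    qed
    have "Y n < Y (Suc n)"
    proof (rule ccontr)
      assume "\<not> Y n < Y (Suc n)"
      then have le: "Y (Suc n) \<le> Y n" by simp
      have yn: "Y n < 0" using neg[OF \<open>n \<ge> 1\<close>] .
      have "L (Suc n) * Y (Suc n) \<le> L (Suc n) * Y n" using le L0[of "Suc n"] by simp
      also have "\<dots> < L n * Y n" using L1[OF \<open>n \<ge> 1\<close>] yn by simp
      finally have "Phi (L (Suc n) * Y (Suc n)) < Phi (L n * Y n)" by (rule Phi_strict)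
      moreover have "Phi (Y (Suc n)) \<le> Phi (Y n)" using Phi_mono[OF le] .
      ultimately have "g * Phi (Y (Suc n)) + (1 - g) * Phi (L (Suc n) * Y (Suc n)) < g * Phi (Y n) + (1 - g) * Phi (L n * Y n)"
        using g0 g1 by (intro add_le_less_mono mult_left_mono mult_strict_left_mono) auto
      then show False using E[OF \<open>n \<ge> 1\<close>] E[of "Suc n"] \<open>n \<ge> 1\<close> by simp
    qed
    then show ?thesis using neg[OF \<open>n \<ge> 1\<close>] by simp
  qed
  show ?thesis using over under unfolding R_def by blast
qed
end
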